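(* Let $K\subset Y$ and $K_h\subset Y_h$ be non-empty, convex and closed sets, where $Y_h\subset Y$ is a finite-dimensional subspace (not necessarily $K_h\subset K$). Let $\overline{y}\in H_Y$, $\varrho>0$, let $y_\varrho\in K$ solve $\langle y_\varrho,y-y_\varrho\rangle_{H_Y}+\varrho\langle Dy_\varrho,y-y_\varrho\rangle_{Y^*,Y}\ge\langle\overline{y},y-y_\varrho\rangle_{H_Y}$ for all $y\in K$, and let $y_{\varrho h}\in K_h$ solve $\langle y_{\varrho h},y_h-y_{\varrho h}\rangle_{H_Y}+\varrho\langle Dy_{\varrho h},y_h-y_{\varrho h}\rangle_{Y^*,Y}\ge\langle\overline{y},y_h-y_{\varrho h}\rangle_{H_Y}$ for all $y_h\in K_h$. Assume $\varrho Dy_\varrho+y_\varrho-\overline{y}\in H_Y$. Then $$\|y_\varrho-y_{\varrho h}\|_{H_Y}^2+2\varrho\|y_\varrho-y_{\varrho h}\|_D^2\le 2\inf_{y_h\in K_h}\Big[3\|y_\varrho-y_h\|_{H_Y}^2+\varrho\|y_\varrho-y_h\|_D^2\Big]+4\|\varrho Dy_\varrho+y_\varrho-\overline{y}\|_{H_Y}^2.$$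
   Context: Abstract setting: Let $Y\subset H_Y\subset Y^*$ be a Gelfand triple of real Hilbert spaces, with duality pairing $\langle\cdot,\cdot\rangle_{Y^*,Y}$ extending the inner product of $H_Y$. Let $D:Y\to Y^*$ be bounded, linear, self-adjoint and elliptic, $\|y\|_D:=\langle Dy,y\rangle_{Y^*,Y}^{1/2}$ (an equivalent norm on $Y$). An element $g\in Y^*$ is said to belong to $H_Y$ if there is $w\in H_Y$ with $\langle g,v\rangle_{Y^*,Y}=\langle w,v\rangle_{H_Y}$ for all $v\in Y$, and then $\|g\|_{H_Y}:=\|w\|_{H_Y}$. *)

theory Defs
  imports "HOL-Analysis.Analysis"
begin

text \<open>Gelfand triple Y \<subseteq> H_Y \<subseteq> Y*: Y is a real Hilbert space (type 'y), H_Y is a real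
Hilbert space (type 'h), and the inclusion Y \<subseteq> H_Y is the continuous, injective
linear map \<iota> with dense range. Elements of Y* are bounded linear functionals on Y;
h \<in> H_Y is identified with the functional v \<mapsto> \<langle>h, \<iota> v\<rangle>_H, so the duality pairing
extends the H_Y inner product.\<close>

definition gelfand_embedding :: "('y::{real_inner,complete_space} \<Rightarrow> 'h::{real_inner,complete_space}) \<Rightarrow> bool" where
  "gelfand_embedding \<iota> \<longleftrightarrow> bounded_linear \<iota> \<and> inj \<iota> \<and> closure (range \<iota>) = UNIV"

text \<open>An operator D : Y \<rightarrow> Y*, represented by D y v = \<langle>D y, v\<rangle>_{Y*,Y}:
bounded, linear, self-adjoint and elliptic.\<close>

definition bdd_sa_elliptic_op :: "('y::real_normed_vector \<Rightarrow> 'y \<Rightarrow> real) \<Rightarrow> bool" where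
  "bdd_sa_elliptic_op D \<longleftrightarrow> bounded_bilinear D \<and> (\<forall>y v. D y v = D v y)
     \<and> (\<exists>\<alpha>>0. \<forall>y. D y y \<ge> \<alpha> * (norm y)\<^sup>2)"

definition normD :: "('y \<Rightarrow> 'y \<Rightarrow> real) \<Rightarrow> 'y \<Rightarrow> real" where
  "normD D y = sqrt (D y y)"

definition in_HY :: "('y \<Rightarrow> 'h::real_inner) \<Rightarrow> ('y \<Rightarrow> real) \<Rightarrow> bool" where
  "in_HY \<iota> g \<longleftrightarrow> (\<exists>w. \<forall>v. g v = inner w (\<iota> v))"

definition normHY :: "('y \<Rightarrow> 'h::real_inner) \<Rightarrow> ('y \<Rightarrow> real) \<Rightarrow> real" where
  "normHY \<iota> g = norm (THE w. \<forall>v. g v = inner w (\<iota> v))"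

end

theory Submission
  imports Defs
begin

lemma repr_unique:
  fixes \<iota> :: "'y::{real_inner,complete_space} \<Rightarrow> 'h::{real_inner,complete_space}"
  assumes g: "gelfand_embedding \<iota>" and w: "\<forall>v. f v = inner w (\<iota> v)"
  shows "(THE w. \<forall>v. f v = inner w (\<iota> v)) = w"
proof (rule the_equality)
  show "\<forall>v. f v = inner w (\<iota> v)" by fact
next
  fix w' assume w': "\<forall>v. f v = inner w' (\<iota> v)"
  define z where "z = w' - w"
  have "range \<iota> \<subseteq> {x. inner z x = 0}"
    using w w' by (auto simp: z_def inner_diff_left)
  moreover have "closed {x. inner z x = 0}" by (rule closed_hyperplane)
  ultimately have "closure (range \<iota>) \<subseteq> {x. inner z x = 0}" by (rule closure_minimal)
  with g have "inner z z = 0" unfolding gelfand_embedding_def by blast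
  thus "w' = w" by (simp add: z_def)
qed

theorem mainTheorem9:
  fixes \<iota> :: "'y::{real_inner,complete_space} \<Rightarrow> 'h::{real_inner,complete_space}"
    and D :: "'y \<Rightarrow> 'y \<Rightarrow> real"
    and K Kh Yh :: "'y set"
    and ybar :: 'h and \<rho> :: real and y\<rho> y\<rho>h :: 'y
  assumes gelfand: "gelfand_embedding \<iota>"
    and D: "bdd_sa_elliptic_op D"
    and Yh: "subspace Yh" "\<exists>B. finite B \<and> Yh = span B"
    and K: "K \<noteq> {}" "convex K" "closed K"
    and Kh: "Kh \<noteq> {}" "convex Kh" "closed Kh" "Kh \<subseteq> Yh"
    and rho: "\<rho> > 0"
    and y\<rho>: "y\<rho> \<in> K"
      "\<forall>y\<in>K. inner (\<iota> y\<rho>) (\<iota> (y - y\<rho>)) + \<rho> * D y\<rho> (y - y\<rho>) \<ge> inner ybar (\<iota> (y - y\<rho>))"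
    and y\<rho>h: "y\<rho>h \<in> Kh"
      "\<forall>yh\<in>Kh. inner (\<iota> y\<rho>h) (\<iota> (yh - y\<rho>h)) + \<rho> * D y\<rho>h (yh - y\<rho>h) \<ge> inner ybar (\<iota> (yh - y\<rho>h))"
    and reg: "in_HY \<iota> (\<lambda>v. \<rho> * D y\<rho> v + inner (\<iota> y\<rho>) (\<iota> v) - inner ybar (\<iota> v))"
  shows "(norm (\<iota> (y\<rho> - y\<rho>h)))\<^sup>2 + 2 * \<rho> * (normD D (y\<rho> - y\<rho>h))\<^sup>2
    \<le> 2 * (INF yh\<in>Kh. 3 * (norm (\<iota> (y\<rho> - yh)))\<^sup>2 + \<rho> * (normD D (y\<rho> - yh))\<^sup>2)
      + 4 * (normHY \<iota> (\<lambda>v. \<rho> * D y\<rho> v + inner (\<iota> y\<rho>) (\<iota> v) - inner ybar (\<iota> v)))\<^sup>2"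
proof -
  from reg obtain w where w: "\<forall>v. \<rho> * D y\<rho> v + inner (\<iota> y\<rho>) (\<iota> v) - inner ybar (\<iota> v) = inner w (\<iota> v)"
    unfolding in_HY_def by blast
  have nW: "normHY \<iota> (\<lambda>v. \<rho> * D y\<rho> v + inner (\<iota> y\<rho>) (\<iota> v) - inner ybar (\<iota> v)) = norm w"
    unfolding normHY_def using repr_unique[OF gelfand w] by simp
  have bb: "bounded_bilinear D" and sym: "\<And>y v. D y v = D v y"
    and ell: "\<exists>\<alpha>>0. \<forall>y. D y y \<ge> \<alpha> * (norm y)\<^sup>2"
    using D unfolding bdd_sa_elliptic_op_def by auto
  have Dpos: "D y y \<ge> 0" for y
  proof -
    from ell obtain \<alpha> where "\<alpha> > 0" "\<forall>y. D y y \<ge> \<alpha> * (norm y)\<^sup>2" by auto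
    thus ?thesis by (meson mult_nonneg_nonneg less_imp_le order_trans zero_le_power2)
  qed
  have nD: "(normD D y)\<^sup>2 = D y y" for y unfolding normD_def using Dpos by simp
  have lin: "linear \<iota>" using gelfand unfolding gelfand_embedding_def
    using bounded_linear.linear by blast
  have idiff: "\<iota> (a - b) = \<iota> a - \<iota> b" for a b using lin by (simp add: linear_diff)
  have Ddl: "D (a - b) c = D a c - D b c" for a b c using bounded_bilinear.diff_left[OF bb] .
  have Ddr: "D c (a - b) = D c a - D c b" for a b c using bounded_bilinear.diff_right[OF bb] .
  define e where "e = y\<rho> - y\<rho>h"
  define W where "W = norm w"
  have key: "(norm (\<iota> e))\<^sup>2 + 2 * \<rho> * D e e \<le> 2 * (3 * (norm (\<iota> (y\<rho> - yh)))\<^sup>2 + \<rho> * D (y\<rho> - yh) (y\<rho> - yh)) + 4 * W\<^sup>2"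
    if yh: "yh \<in> Kh" for yh
  proof -
    define d where "d = y\<rho> - yh"
    have vi: "inner (\<iota> y\<rho>h) (\<iota> (yh - y\<rho>h)) + \<rho> * D y\<rho>h (yh - y\<rho>h) \<ge> inner ybar (\<iota> (yh - y\<rho>h))"
      using y\<rho>h(2) yh by blast
    have wv: "\<rho> * D y\<rho> (yh - y\<rho>h) + inner (\<iota> y\<rho>) (\<iota> (yh - y\<rho>h)) - inner ybar (\<iota> (yh - y\<rho>h)) = inner w (\<iota> (yh - y\<rho>h))"
      using w by blast
    have yhe: "yh - y\<rho>h = e - d" by (simp add: e_def d_def)
    have ee: "y\<rho>h = y\<rho> - e" by (simp add: e_def)
    have main: "inner (\<iota> e) (\<iota> e) + \<rho> * D e e \<le> inner (\<iota> e) (\<iota> d) + \<rho> * D e d + inner w (\<iota> e) - inner w (\<iota> d)"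
    proof -
      have "inner (\<iota> e) (\<iota> e) + \<rho> * D e e
          = (inner (\<iota> e) (\<iota> d) + \<rho> * D e d) + (inner (\<iota> e) (\<iota> (e - d)) + \<rho> * D e (e - d))"
        by (simp add: idiff inner_diff_right Ddr algebra_simps)
      also have "inner (\<iota> e) (\<iota> (e - d)) + \<rho> * D e (e - d)
          = (inner (\<iota> y\<rho>) (\<iota> (e - d)) + \<rho> * D y\<rho> (e - d)) - (inner (\<iota> y\<rho>h) (\<iota> (e - d)) + \<rho> * D y\<rho>h (e - d))"
        by (simp add: ee idiff inner_diff_left Ddl algebra_simps)
      also have "\<dots> \<le> (inner (\<iota> y\<rho>) (\<iota> (e - d)) + \<rho> * D y\<rho> (e - d)) - inner ybar (\<iota> (e - d))"
        using vi yhe by simp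
      also have "\<dots> = inner w (\<iota> (e - d))" using wv yhe by simp
      finally show ?thesis by (simp add: idiff inner_diff_right)
    qed
    have c1: "inner (\<iota> e) (\<iota> d) \<le> norm (\<iota> e) * norm (\<iota> d)" by (rule norm_cauchy_schwarz)
    have c2: "inner w (\<iota> e) \<le> W * norm (\<iota> e)" unfolding W_def by (rule norm_cauchy_schwarz)
    have c3: "- inner w (\<iota> d) \<le> W * norm (\<iota> d)" unfolding W_def
      using Cauchy_Schwarz_ineq2[of w "\<iota> d"] by (auto simp: abs_le_iff)
    have c4: "2 * D e d \<le> D e e + D d d"
    proof -
      have "0 \<le> D (e - d) (e - d)" by (rule Dpos)
      also have "\<dots> = D e e + D d d - 2 * D e d" by (simp add: Ddl Ddr sym[of d e])
      finally show ?thesis by simp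
    qed
    have c4': "2 * (\<rho> * D e d) \<le> \<rho> * D e e + \<rho> * D d d"
      using mult_left_mono[OF c4, of \<rho>] rho by (simp add: algebra_simps)
    have ie: "inner (\<iota> e) (\<iota> e) = (norm (\<iota> e))\<^sup>2" by (simp add: power2_norm_eq_inner)
    define E where "E = norm (\<iota> e)"
    define F where "F = norm (\<iota> d)"
    have sq: "0 \<le> (E - 2*F)\<^sup>2" "0 \<le> (W - F)\<^sup>2" "0 \<le> (W - E)\<^sup>2" by auto
    have "E\<^sup>2 + 2 * \<rho> * D e e \<le> 6 * F\<^sup>2 + 2 * \<rho> * D d d + 4 * W\<^sup>2"
      using main c1 c2 c3 c4' ie sq unfolding E_def[symmetric] F_def[symmetric]
      by (simp add: power2_eq_square algebra_simps)
    thus ?thesis unfolding E_def F_def d_def by simp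
  qed
  have "((norm (\<iota> e))\<^sup>2 + 2 * \<rho> * D e e - 4 * W\<^sup>2) / 2
      \<le> (INF yh\<in>Kh. 3 * (norm (\<iota> (y\<rho> - yh)))\<^sup>2 + \<rho> * (normD D (y\<rho> - yh))\<^sup>2)"
    unfolding nD using key Kh(1) by (intro cINF_greatest) (auto simp: field_simps)
  thus ?thesis unfolding nW nD e_def[symmetric] W_def[symmetric] by simp
qed

end
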